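(* Let $G$ be an abelian group with nontrivial torsion subgroup, let $p=p(G)$, and let $A\subseteq G$ with $|A|<\lceil \log_2 p\rceil$. Then there exists a total ordering $\preceq$ of $A$ that is compatible with the group structure of $G$.
   Context: $p(G)$ denotes the smallest cardinality of a nonzero subgroup of $G$. A total order $\preceq$ on $A\subseteq G$ is compatible with the group structure if for all $a,b,c\in A$, $a\preceq b$ implies $a+c\preceq b+c$. *)

theory Defs
  imports Complex_Main
begin

definition add_subgroup :: "'a::ab_group_add set \<Rightarrow> bool" where
  "add_subgroup H \<longleftrightarrow> 0 \<in> H \<and> (\<forall>x\<in>H. \<forall>y\<in>H. x + y \<in> H) \<and> (\<forall>x\<in>H. - x \<in> H)"

definition torsion_subgroup :: "'a::ab_group_add set" where
  "torsion_subgroup = {x. \<exists>n::nat. n > 0 \<and> (\<Sum>i<n. x) = 0}"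

text \<open>A nonzero subgroup of
  smallest cardinality is finite as soon as a finite nonzero subgroup exists,
  which is the case when the torsion subgroup is nontrivial.\<close>
definition pG :: "'a::ab_group_add itself \<Rightarrow> nat" where
  "pG _ = (LEAST n. \<exists>H::'a set. add_subgroup H \<and> H \<noteq> {0} \<and> finite H \<and> card H = n)"

definition compatible_order :: "'a::ab_group_add set \<Rightarrow> 'a rel \<Rightarrow> bool" where
  "compatible_order A r \<longleftrightarrow> linear_order_on A r \<and>
     (\<forall>a\<in>A. \<forall>b\<in>A. \<forall>c\<in>A. a + c \<in> A \<and> b + c \<in> A \<and> (a, b) \<in> r \<longrightarrow> (a + c, b + c) \<in> r)"

end

theory Submission
  imports Defs "HOL-Library.Function_Algebras"
begin

definition nmul :: "nat \<Rightarrow> 'a::ab_group_add \<Rightarrow> 'a" where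
  "nmul n x = (\<Sum>i<n. x)"

lemma nmul_0[simp]: "nmul 0 x = 0" by (simp add: nmul_def)
lemma nmul_Suc: "nmul (Suc n) x = x + nmul n x" by (simp add: nmul_def add.commute)
lemma nmul_1[simp]: "nmul 1 x = x" by (simp add: nmul_def)
lemma nmul_add: "nmul (m + n) x = nmul m x + nmul n x"
  by (induct m) (simp_all add: nmul_Suc add.assoc)
lemma nmul_mult: "nmul (m * n) x = nmul m (nmul n x)"
  by (induct m) (simp_all add: nmul_Suc nmul_add)
lemma nmul_plus: "nmul n (x + y) = nmul n x + nmul n y"
  by (simp add: nmul_def sum.distrib)
lemma nmul_uminus: "nmul n (- x) = - nmul n x"
  by (simp add: nmul_def sum_negf)
lemma nmul_zero[simp]: "nmul n 0 = 0" by (simp add: nmul_def)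
lemma nmul_diff: "nmul n (x - y) = nmul n x - nmul n y"
  using nmul_plus[of n x "- y"] by (simp add: nmul_uminus)

definition zmul :: "int \<Rightarrow> 'a::ab_group_add \<Rightarrow> 'a" where
  "zmul j x = nmul (nat j) x - nmul (nat (- j)) x"

lemma zmul_nat_diff: "zmul (int m - int n) x = nmul m x - nmul n x"
proof (cases "n \<le> m")
  case True
  then have "nmul m x = nmul (m - n) x + nmul n x" using nmul_add[of "m - n" n x] by simp
  then show ?thesis using True by (simp add: zmul_def nat_diff_distrib')
next
  case False
  then have "nmul n x = nmul (n - m) x + nmul m x" using nmul_add[of "n - m" m x] by simp
  then show ?thesis using False by (simp add: zmul_def nat_diff_distrib')
qed

lemma int_as_diff: obtains m n where "j = int m - int n"
  by (metis int_ops(6) of_nat_0 diff_zero nat_0_le nat_le_0 not_le minus_diff_eq zero_le_imp_eq_int nat_int le_cases of_nat_0_le_iff diff_0 neg_0_le_iff_le int_nat_eq)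

lemma zmul_nat[simp]: "zmul (int n) x = nmul n x" by (simp add: zmul_def)
lemma zmul_0[simp]: "zmul 0 x = 0" by (simp add: zmul_def)
lemma zmul_1[simp]: "zmul 1 x = x" by (simp add: zmul_def nmul_def)
lemma zmul_zero[simp]: "zmul j 0 = 0" by (simp add: zmul_def)

lemma zmul_add: "zmul (i + j) x = zmul i x + zmul j x"
proof -
  obtain m1 n1 where i: "i = int m1 - int n1" by (rule int_as_diff)
  obtain m2 n2 where j: "j = int m2 - int n2" by (rule int_as_diff)
  have "i + j = int (m1 + m2) - int (n1 + n2)" using i j by simp
  then show ?thesis unfolding i j by (simp only: zmul_nat_diff nmul_add) (simp add: algebra_simps)
qed

lemma zmul_uminus_left: "zmul (- j) x = - zmul j x"
  by (simp add: zmul_def)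

lemma zmul_plus: "zmul j (x + y) = zmul j x + zmul j y"
  by (simp add: zmul_def nmul_plus algebra_simps)

lemma zmul_uminus_right: "zmul j (- x) = - zmul j x"
  by (simp add: zmul_def nmul_uminus)

lemma zmul_diff_right: "zmul j (x - y) = zmul j x - zmul j y"
  by (simp add: zmul_def nmul_diff algebra_simps)

lemma zmul_diff_left: "zmul (i - j) x = zmul i x - zmul j x"
  using zmul_add[of i "- j" x] by (simp add: zmul_uminus_left)

lemma zmul_mult: "zmul (i * j) x = zmul i (zmul j x)"
proof -
  obtain m1 n1 where i: "i = int m1 - int n1" by (rule int_as_diff)
  obtain m2 n2 where j: "j = int m2 - int n2" by (rule int_as_diff)
  have "i * j = int (m1 * m2 + n1 * n2) - int (m1 * n2 + n1 * m2)" unfolding i j by (simp add: algebra_simps)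
  then show ?thesis unfolding i j
    by (simp only: zmul_nat_diff nmul_add nmul_mult nmul_diff) (simp add: algebra_simps)
qed

definition cong1 :: "real \<Rightarrow> real \<Rightarrow> bool" where
  "cong1 u w \<longleftrightarrow> u - w \<in> \<int>"

lemma cong1_refl[simp]: "cong1 u u" by (simp add: cong1_def)
lemma cong1_sym: "cong1 u w \<Longrightarrow> cong1 w u"
  unfolding cong1_def using Ints_minus[of "u - w"] by simp
lemma cong1_trans: "cong1 u w \<Longrightarrow> cong1 w z \<Longrightarrow> cong1 u z"
  unfolding cong1_def using Ints_add[of "u - w" "w - z"] by simp
lemma cong1_add: "cong1 u w \<Longrightarrow> cong1 u' w' \<Longrightarrow> cong1 (u + u') (w + w')"
  unfolding cong1_def using Ints_add[of "u - w" "u' - w'"] by (simp add: algebra_simps)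
lemma cong1_diff: "cong1 u w \<Longrightarrow> cong1 u' w' \<Longrightarrow> cong1 (u - u') (w - w')"
  unfolding cong1_def using Ints_diff[of "u - w" "u' - w'"] by (simp add: algebra_simps)
lemma cong1_neg: "cong1 u w \<Longrightarrow> cong1 (- u) (- w)"
  unfolding cong1_def using Ints_minus[of "u - w"] by simp
lemma cong1_mult_int: "m \<in> \<int> \<Longrightarrow> cong1 u w \<Longrightarrow> cong1 (m * u) (m * w)"
  unfolding cong1_def using Ints_mult[of m "u - w"] by (simp add: algebra_simps)
lemma cong1_int: "u \<in> \<int> \<Longrightarrow> cong1 u 0"
  by (simp add: cong1_def)

definition char_on :: "'a::ab_group_add set \<Rightarrow> ('a \<Rightarrow> real) \<Rightarrow> bool" where
  "char_on K \<chi> \<longleftrightarrow> (\<forall>x\<in>K. \<forall>y\<in>K. cong1 (\<chi> (x + y)) (\<chi> x + \<chi> y))"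

lemma subgroup_nmul: "add_subgroup K \<Longrightarrow> x \<in> K \<Longrightarrow> nmul n x \<in> K"
  by (induct n) (auto simp: nmul_Suc add_subgroup_def)

lemma subgroup_diff0: "add_subgroup K \<Longrightarrow> x \<in> K \<Longrightarrow> y \<in> K \<Longrightarrow> x - y \<in> K"
  unfolding add_subgroup_def diff_conv_add_uminus by blast

lemma subgroup_zmul: "add_subgroup K \<Longrightarrow> x \<in> K \<Longrightarrow> zmul j x \<in> K"
  unfolding zmul_def using subgroup_nmul[of K x] subgroup_diff0[of K] by blast


lemma char_zero: assumes "add_subgroup K" "char_on K \<chi>" shows "cong1 (\<chi> 0) 0"
proof -
  have "0 \<in> K" using assms(1) by (simp add: add_subgroup_def)
  then have "cong1 (\<chi> 0) (\<chi> 0 + \<chi> 0)" using assms(2) unfolding char_on_def by force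
  then have "cong1 (\<chi> 0 - \<chi> 0) (\<chi> 0 + \<chi> 0 - \<chi> 0)" by (rule cong1_diff) simp
  then show ?thesis by (simp add: cong1_sym)
qed

lemmas cong1_trans' [trans] = cong1_trans

lemma char_nmul: assumes "add_subgroup K" "char_on K \<chi>" "x \<in> K"
  shows "cong1 (\<chi> (nmul n x)) (real n * \<chi> x)"
proof (induct n)
  case 0 then show ?case using char_zero[OF assms(1,2)] by simp
next
  case (Suc n)
  have "cong1 (\<chi> (x + nmul n x)) (\<chi> x + \<chi> (nmul n x))"
    using assms subgroup_nmul[OF assms(1,3)] unfolding char_on_def by blast
  also have "cong1 \<dots> (\<chi> x + real n * \<chi> x)" using Suc by (intro cong1_add) simp_all
  finally show ?case by (simp add: nmul_Suc algebra_simps)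
qed


lemma char_neg: assumes "add_subgroup K" "char_on K \<chi>" "x \<in> K"
  shows "cong1 (\<chi> (- x)) (- \<chi> x)"
proof -
  have mx: "- x \<in> K" using assms by (simp add: add_subgroup_def)
  have "cong1 (\<chi> (x + - x)) (\<chi> x + \<chi> (- x))" using assms mx unfolding char_on_def by blast
  then have "cong1 (\<chi> x + \<chi> (- x)) (\<chi> 0)" by (simp add: cong1_sym)
  then have "cong1 (\<chi> x + \<chi> (- x)) 0" using char_zero[OF assms(1,2)] by (rule cong1_trans)
  then have "cong1 (\<chi> x + \<chi> (- x) - \<chi> x) (0 - \<chi> x)" by (rule cong1_diff) simp
  then show ?thesis by simp
qed

lemma char_zmul: assumes "add_subgroup K" "char_on K \<chi>" "x \<in> K"
  shows "cong1 (\<chi> (zmul j x)) (real_of_int j * \<chi> x)"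
proof -
  have a: "nmul (nat j) x \<in> K" "nmul (nat (-j)) x \<in> K" using subgroup_nmul assms by auto
  then have b: "- nmul (nat (-j)) x \<in> K" using assms(1) by (simp add: add_subgroup_def)
  have zj: "zmul j x = nmul (nat j) x + - nmul (nat (-j)) x" by (simp add: zmul_def)
  have "cong1 (\<chi> (nmul (nat j) x + - nmul (nat (-j)) x)) (\<chi> (nmul (nat j) x) + \<chi> (- nmul (nat (-j)) x))"
    using assms(2) a(1) b unfolding char_on_def by blast
  then have "cong1 (\<chi> (zmul j x)) (\<chi> (nmul (nat j) x) + \<chi> (- nmul (nat (-j)) x))"
    by (simp only: zj)
  also have "cong1 \<dots> (real (nat j) * \<chi> x + - (real (nat (-j)) * \<chi> x))"
  proof (rule cong1_add)
    show "cong1 (\<chi> (nmul (nat j) x)) (real (nat j) * \<chi> x)" by (rule char_nmul[OF assms])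
    show "cong1 (\<chi> (- nmul (nat (- j)) x)) (- (real (nat (- j)) * \<chi> x))"
      by (rule cong1_trans[OF char_neg[OF assms(1,2) a(2)] cong1_neg[OF char_nmul[OF assms]]])
  qed
  also have "real (nat j) * \<chi> x + - (real (nat (-j)) * \<chi> x) = real_of_int j * \<chi> x"
  proof (cases "j \<ge> 0")
    case True then show ?thesis by simp
  next
    case False then have "real (nat (-j)) = - real_of_int j" by simp
    then show ?thesis using False by simp
  qed
  finally show ?thesis .
qed

lemma char_extend:
  fixes K :: "'a::ab_group_add set"
  assumes K: "add_subgroup K" and ch: "char_on K \<chi>"
    and t: "\<forall>n. zmul n y \<in> K \<longrightarrow> cong1 (real_of_int n * t) (\<chi> (zmul n y))"
  shows "\<exists>K' \<chi>'. add_subgroup K' \<and> char_on K' \<chi>' \<and> K \<subseteq> K' \<and> y \<in> K' \<and>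
           (\<forall>x\<in>K. cong1 (\<chi>' x) (\<chi> x)) \<and> cong1 (\<chi>' y) t"
proof -
  define K' where "K' = {k + zmul j y | k j. k \<in> K}"
  define \<chi>' where "\<chi>' z = (case (SOME (k, j). k \<in> K \<and> z = k + zmul j y) of (k, j) \<Rightarrow> \<chi> k + real_of_int j * t)" for z
  have key: "cong1 (\<chi>' z) (\<chi> k + real_of_int j * t)" if kK: "k \<in> K" and z: "z = k + zmul j y" for z k j
  proof -
    obtain k0 j0 where kj0: "(SOME (k, j). k \<in> K \<and> z = k + zmul j y) = (k0, j0)" by fastforce
    have "\<exists>p. (case p of (k, j) \<Rightarrow> k \<in> K \<and> z = k + zmul j y)" using kK z by auto
    then have "(case (SOME p. case p of (k, j) \<Rightarrow> k \<in> K \<and> z = k + zmul j y) of (k, j) \<Rightarrow> k \<in> K \<and> z = k + zmul j y)"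
      by (rule someI_ex)
    then have k0: "k0 \<in> K" and z0: "z = k0 + zmul j0 y" using kj0 by auto
    have chi0: "\<chi>' z = \<chi> k0 + real_of_int j0 * t" unfolding \<chi>'_def kj0 by simp
    have "zmul (j - j0) y = k0 - k" using z z0 by (simp add: zmul_diff_left algebra_simps)
    moreover have "k0 - k \<in> K" using K k0 kK by (rule subgroup_diff0)
    ultimately have c1: "cong1 (real_of_int (j - j0) * t) (\<chi> (k0 - k))" using t by (metis (no_types))
    have "cong1 (\<chi> (k + (k0 - k))) (\<chi> k + \<chi> (k0 - k))"
      using ch kK \<open>k0 - k \<in> K\<close> unfolding char_on_def by blast
    then have c2: "cong1 (\<chi> k0) (\<chi> k + \<chi> (k0 - k))" by simp
    have "cong1 (\<chi> k0) (\<chi> k + real_of_int (j - j0) * t)"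
      using c2 cong1_add[OF cong1_refl cong1_sym[OF c1], of "\<chi> k"] by (rule cong1_trans)
    then have "cong1 (\<chi> k0 + real_of_int j0 * t) (\<chi> k + real_of_int (j - j0) * t + real_of_int j0 * t)"
      by (rule cong1_add) simp
    then show ?thesis unfolding chi0 by (simp add: algebra_simps)
  qed
  have sub: "add_subgroup K'"
    unfolding add_subgroup_def
  proof (intro conjI ballI)
    have "0 \<in> K" using K by (simp add: add_subgroup_def)
    moreover have "(0::'a) = 0 + zmul 0 y" by simp
    ultimately show "0 \<in> K'" unfolding K'_def by blast
  next
    fix x1 x2 assume "x1 \<in> K'" "x2 \<in> K'"
    then obtain k1 j1 k2 j2 where "x1 = k1 + zmul j1 y" "k1 \<in> K" "x2 = k2 + zmul j2 y" "k2 \<in> K"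
      unfolding K'_def by blast
    moreover then have "k1 + k2 \<in> K" using K by (simp add: add_subgroup_def)
    moreover have "x1 + x2 = (k1 + k2) + zmul (j1 + j2) y"
      using calculation by (simp add: zmul_add algebra_simps)
    ultimately show "x1 + x2 \<in> K'" unfolding K'_def by blast
  next
    fix x1 assume "x1 \<in> K'"
    then obtain k1 j1 where "x1 = k1 + zmul j1 y" "k1 \<in> K" unfolding K'_def by blast
    moreover then have "- k1 \<in> K" using K by (simp add: add_subgroup_def)
    moreover have "- x1 = (- k1) + zmul (- j1) y"
      using calculation by (simp add: zmul_uminus_left)
    ultimately show "- x1 \<in> K'" unfolding K'_def by blast
  qed
  have chK': "char_on K' \<chi>'"
    unfolding char_on_def
  proof (intro ballI)
    fix x1 x2 assume "x1 \<in> K'" "x2 \<in> K'"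
    then obtain k1 j1 k2 j2 where x1: "x1 = k1 + zmul j1 y" "k1 \<in> K" and x2: "x2 = k2 + zmul j2 y" "k2 \<in> K"
      unfolding K'_def by blast
    have s: "x1 + x2 = (k1 + k2) + zmul (j1 + j2) y" using x1 x2 by (simp add: zmul_add algebra_simps)
    have kk: "k1 + k2 \<in> K" using K x1 x2 by (simp add: add_subgroup_def)
    have "cong1 (\<chi>' (x1 + x2)) (\<chi> (k1 + k2) + real_of_int (j1 + j2) * t)" by (rule key[OF kk s])
    also have "cong1 \<dots> (\<chi> k1 + \<chi> k2 + real_of_int (j1 + j2) * t)"
      using ch x1(2) x2(2) unfolding char_on_def by (intro cong1_add) auto
    also have "\<chi> k1 + \<chi> k2 + real_of_int (j1 + j2) * t = (\<chi> k1 + real_of_int j1 * t) + (\<chi> k2 + real_of_int j2 * t)"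
      by (simp add: algebra_simps)
    also have "cong1 \<dots> (\<chi>' x1 + \<chi>' x2)"
      by (rule cong1_add; rule cong1_sym; rule key) (simp_all add: x1 x2)
    finally show "cong1 (\<chi>' (x1 + x2)) (\<chi>' x1 + \<chi>' x2)" .
  qed
  have "K \<subseteq> K'"
  proof
    fix x assume "x \<in> K"
    moreover have "x = x + zmul 0 y" by simp
    ultimately show "x \<in> K'" unfolding K'_def by blast
  qed
  moreover have "y \<in> K'"
  proof -
    have "(0::'a) \<in> K" using K by (simp add: add_subgroup_def)
    moreover have "y = 0 + zmul 1 y" by simp
    ultimately show ?thesis unfolding K'_def by blast
  qed
  moreover have "\<forall>x\<in>K. cong1 (\<chi>' x) (\<chi> x)"
    using key[of _ _ 0] by simp
  moreover have "cong1 (\<chi>' y) t"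
  proof -
    have "cong1 (\<chi>' y) (\<chi> 0 + t)"
      using key[of 0 y 1] K by (simp add: add_subgroup_def)
    moreover have "cong1 (\<chi> 0 + t) (0 + t)" using char_zero[OF K ch] by (rule cong1_add) simp
    ultimately show ?thesis using cong1_trans by fastforce
  qed
  ultimately show ?thesis using sub chK' by blast
qed

lemma exists_t:
  fixes K :: "'a::ab_group_add set"
  assumes K: "add_subgroup K" and ch: "char_on K \<chi>"
  shows "\<exists>t. \<forall>n. zmul n y \<in> K \<longrightarrow> cong1 (real_of_int n * t) (\<chi> (zmul n y))"
proof (cases "\<exists>n::nat. n > 0 \<and> zmul (int n) y \<in> K")
  case True
  define n0 where "n0 = (LEAST n::nat. n > 0 \<and> zmul (int n) y \<in> K)"
  have n0: "n0 > 0" "zmul (int n0) y \<in> K"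
    using LeastI_ex[OF True] unfolding n0_def by auto
  define t where "t = \<chi> (zmul (int n0) y) / real n0"
  show ?thesis
  proof (intro exI allI impI)
    fix n assume nK: "zmul n y \<in> K"
    define c where "c = n div int n0"
    define r where "r = n mod int n0"
    have ncr: "n = c * int n0 + r" unfolding c_def r_def by simp
    have "zmul n y = zmul c (zmul (int n0) y) + zmul r y"
      by (simp add: ncr zmul_add zmul_mult)
    then have "zmul r y = zmul n y - zmul c (zmul (int n0) y)" by (simp add: algebra_simps)
    moreover have "zmul c (zmul (int n0) y) \<in> K" using subgroup_zmul[OF K n0(2)] .
    ultimately have rK: "zmul r y \<in> K" using subgroup_diff0[OF K nK] by simp
    have r0: "r \<ge> 0" "r < int n0" unfolding r_def using n0(1) by simp_all
    have "r = 0"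
    proof (rule ccontr)
      assume "r \<noteq> 0"
      then have "nat r > 0 \<and> zmul (int (nat r)) y \<in> K" using r0 rK by simp
      then have "n0 \<le> nat r" unfolding n0_def by (rule Least_le)
      then show False using r0 by simp
    qed
    then have nc: "n = c * int n0" using ncr by simp
    have "cong1 (\<chi> (zmul n y)) (real_of_int c * \<chi> (zmul (int n0) y))"
      unfolding nc zmul_mult by (rule char_zmul[OF K ch n0(2)])
    moreover have "real_of_int c * \<chi> (zmul (int n0) y) = real_of_int n * t"
      unfolding t_def nc using n0(1) by simp
    ultimately show "cong1 (real_of_int n * t) (\<chi> (zmul n y))" by (simp add: cong1_sym)
  qed
next
  case False
  have "n = 0" if "zmul n y \<in> K" for n
  proof (rule ccontr)
    assume "n \<noteq> 0"
    show False
    proof (cases "n > 0")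
      case True
      then have "nat n > 0 \<and> zmul (int (nat n)) y \<in> K" using that by simp
      then show False using False by blast
    next
      case F: False
      then have "zmul (- n) y \<in> K" using that K by (simp add: zmul_uminus_left add_subgroup_def)
      moreover have "- n > 0" using F \<open>n \<noteq> 0\<close> by simp
      ultimately have "nat (- n) > 0 \<and> zmul (int (nat (- n))) y \<in> K" by simp
      then show False using False by blast
    qed
  qed
  then show ?thesis using char_zero[OF K ch]
  proof (intro exI[of _ 0] allI impI)
    fix n assume a: "zmul n y \<in> K"
    then have "n = 0" using \<open>\<And>n. zmul n y \<in> K \<Longrightarrow> n = 0\<close> by blast
    then show "cong1 (real_of_int n * 0) (\<chi> (zmul n y))" using char_zero[OF K ch] by (simp add: cong1_sym)
  qed
qed

lemma build_char:
  fixes K0 :: "'a::ab_group_add set"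
  assumes "finite S" "add_subgroup K0" "char_on K0 \<chi>0"
  shows "\<exists>K \<chi>. add_subgroup K \<and> char_on K \<chi> \<and> K0 \<subseteq> K \<and> S \<subseteq> K \<and> (\<forall>x\<in>K0. cong1 (\<chi> x) (\<chi>0 x))"
  using assms(1)
proof (induct S rule: finite_induct)
  case empty then show ?case using assms(2,3) by (intro exI[of _ K0] exI[of _ \<chi>0]) auto
next
  case (insert y S)
  then obtain K \<chi> where K: "add_subgroup K" "char_on K \<chi>" "K0 \<subseteq> K" "S \<subseteq> K" "\<forall>x\<in>K0. cong1 (\<chi> x) (\<chi>0 x)"
    by blast
  obtain t where t: "\<forall>n. zmul n y \<in> K \<longrightarrow> cong1 (real_of_int n * t) (\<chi> (zmul n y))"
    using exists_t[OF K(1,2)] by blast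
  obtain K' \<chi>' where K': "add_subgroup K'" "char_on K' \<chi>'" "K \<subseteq> K'" "y \<in> K'" "\<forall>x\<in>K. cong1 (\<chi>' x) (\<chi> x)"
    using char_extend[OF K(1,2) t] by blast
  show ?case
  proof (intro exI conjI)
    show "add_subgroup K'" by (fact K'(1))
    show "char_on K' \<chi>'" by (fact K'(2))
    show "K0 \<subseteq> K'" "insert y S \<subseteq> K'" using K K' by auto
    show "\<forall>x\<in>K0. cong1 (\<chi>' x) (\<chi>0 x)"
    proof
      fix x assume x: "x \<in> K0"
      then have "x \<in> K" using K(3) by blast
      then show "cong1 (\<chi>' x) (\<chi>0 x)" using K'(5) K(5) x cong1_trans[of "\<chi>' x" "\<chi> x" "\<chi>0 x"] by blast
    qed
  qed
qed

lemma subgroup_zero: "add_subgroup {0::'a::ab_group_add}"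
  by (simp add: add_subgroup_def)

lemma char_zero_fun: "char_on {0::'a::ab_group_add} (\<lambda>_. 0)"
  by (simp add: char_on_def)

lemma char_for_v:
  fixes v :: "'a::ab_group_add"
  assumes noTor: "\<And>n. 0 < n \<Longrightarrow> nmul n v = 0 \<Longrightarrow> N < n"
    and S: "finite S"
  shows "\<exists>K \<chi> (q::nat). add_subgroup K \<and> char_on K \<chi> \<and> S \<subseteq> K \<and> v \<in> K \<and> cong1 (\<chi> v) (1 / real q) \<and> N < q"
proof -
  obtain q :: nat where q: "N < q" and qdvd: "\<And>n. zmul n v = 0 \<Longrightarrow> int q dvd n"
  proof (cases "\<exists>n::nat. n > 0 \<and> nmul n v = 0")
    case True
    define q where "q = (LEAST n::nat. n > 0 \<and> nmul n v = 0)"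
    have q0: "q > 0" "nmul q v = 0" using LeastI_ex[OF True] unfolding q_def by auto
    show ?thesis
    proof
      show "N < q" using noTor q0 by blast
      fix n assume nv: "zmul n v = 0"
      define c where "c = n div int q"
      define r where "r = n mod int q"
      have ncr: "n = c * int q + r" unfolding c_def r_def by simp
      have "zmul n v = zmul c (zmul (int q) v) + zmul r v"
        by (simp add: ncr zmul_add zmul_mult)
      then have rv: "zmul r v = 0" using nv q0 by simp
      have r0: "r \<ge> 0" "r < int q" unfolding r_def using q0(1) by simp_all
      have "r = 0"
      proof (rule ccontr)
        assume "r \<noteq> 0"
        then have "nat r > 0 \<and> nmul (nat r) v = 0" using r0 rv by (simp add: zmul_def)
        then have "q \<le> nat r" unfolding q_def by (rule Least_le)
        then show False using r0 by simp
      qed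
      then show "int q dvd n" using ncr by simp
    qed
  next
    case False
    show ?thesis
    proof
      show "N < N + 1" by simp
      fix n assume nv: "zmul n v = 0"
      have "n = 0"
      proof (rule ccontr)
        assume "n \<noteq> 0"
        show False
        proof (cases "n > 0")
          case True
          then have "nat n > 0 \<and> nmul (nat n) v = 0" using nv by (simp add: zmul_def)
          then show False using False by blast
        next
          case F: False
          then have "nat (- n) > 0 \<and> nmul (nat (- n)) v = 0" using nv \<open>n \<noteq> 0\<close> by (simp add: zmul_def)
          then show False using False by blast
        qed
      qed
      then show "int (N + 1) dvd n" by simp
    qed
  qed
  have t: "\<forall>n. zmul n v \<in> {0} \<longrightarrow> cong1 (real_of_int n * (1 / real q)) ((\<lambda>_. 0) (zmul n v))"
  proof (intro allI impI)
    fix n assume "zmul n v \<in> {0}"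
    then obtain c where "n = int q * c" using qdvd by blast
    then have "real_of_int n * (1 / real q) = real_of_int c" using q by simp
    then show "cong1 (real_of_int n * (1 / real q)) ((\<lambda>_. 0) (zmul n v))" by (simp add: cong1_def)
  qed
  obtain K1 \<chi>1 where K1: "add_subgroup K1" "char_on K1 \<chi>1" "v \<in> K1" "cong1 (\<chi>1 v) (1 / real q)"
    using char_extend[OF subgroup_zero char_zero_fun t] by blast
  obtain K \<chi> where K: "add_subgroup K" "char_on K \<chi>" "K1 \<subseteq> K" "S \<subseteq> K" "\<forall>x\<in>K1. cong1 (\<chi> x) (\<chi>1 x)"
    using build_char[OF S K1(1,2)] by blast
  have "cong1 (\<chi> v) (1 / real q)" using K(5) K1(3,4) cong1_trans[of "\<chi> v" "\<chi>1 v" "1 / real q"] by blast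
  then show ?thesis using K K1(3) q by blast
qed

definition sc :: "real \<Rightarrow> ('a \<Rightarrow> real) \<Rightarrow> ('a \<Rightarrow> real)" where
  "sc r f = (\<lambda>z. r * f z)"

lemma vs_sc: "vector_space (sc :: real \<Rightarrow> ('a \<Rightarrow> real) \<Rightarrow> ('a \<Rightarrow> real))"
  by unfold_locales (auto simp: sc_def fun_eq_iff algebra_simps)

definition ind :: "'a \<Rightarrow> 'a \<Rightarrow> real" where
  "ind x = (\<lambda>z. if z = x then 1 else 0)"

definition Dp :: "'a set \<Rightarrow> ('a \<Rightarrow> real) \<Rightarrow> ('a \<Rightarrow> real) \<Rightarrow> real" where
  "Dp A \<rho> g = (\<Sum>z\<in>A. \<rho> z * g z)"

lemma Dp_ind: assumes "finite A" "x \<in> A" shows "Dp A (ind x) g = g x"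
proof -
  have "Dp A (ind x) g = (\<Sum>z\<in>A. if z = x then g x else 0)"
    unfolding Dp_def ind_def by (rule sum.cong) auto
  then show ?thesis using assms by simp
qed

lemma Dp_add: "Dp A (\<rho>1 + \<rho>2) g = Dp A \<rho>1 g + Dp A \<rho>2 g"
  by (simp add: Dp_def algebra_simps sum.distrib)

lemma Dp_diff: "Dp A (\<rho>1 - \<rho>2) g = Dp A \<rho>1 g - Dp A \<rho>2 g"
  by (simp add: Dp_def algebra_simps sum_subtractf)

lemma Dp_sc: "Dp A (sc r \<rho>) g = r * Dp A \<rho> g"
  by (simp add: Dp_def sc_def sum_distrib_left algebra_simps)

lemma Dp_zero: "Dp A 0 g = 0"
  by (simp add: Dp_def)

lemma Dp_gdiff: "Dp A \<rho> (\<lambda>z. g1 z - g2 z) = Dp A \<rho> g1 - Dp A \<rho> g2"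
  by (simp add: Dp_def algebra_simps sum_subtractf)

lemma Dp_row: "finite A \<Longrightarrow> x \<in> A \<Longrightarrow> c \<in> A \<Longrightarrow> d \<in> A \<Longrightarrow>
   Dp A (ind x + ind c - ind d) g = g x + g c - g d"
  by (simp add: Dp_add Dp_diff Dp_ind)

lemma int_small: "(u::real) \<in> \<int> \<Longrightarrow> -1 < u \<Longrightarrow> u < 2 \<Longrightarrow> u = 0 \<or> u = 1"
  by (elim Ints_cases) auto

lemma int_abs_small: "(u::real) \<in> \<int> \<Longrightarrow> \<bar>u\<bar> < 1 \<Longrightarrow> u = 0"
  by (elim Ints_cases) auto

lemma cong1_frac: "cong1 (frac u) u"
  by (simp add: cong1_def frac_def)

lemma separate:
  fixes A :: "'a::ab_group_add set"
  assumes A: "finite A" and aA: "a \<in> A" and bA: "b \<in> A"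
    and chA: "\<forall>x\<in>A. \<forall>c\<in>A. x + c \<in> A \<longrightarrow> cong1 (\<chi> (x + c)) (\<chi> x + \<chi> c)"
    and chab: "cong1 (\<chi> a - \<chi> b) (1 / real q)"
    and q: "2 ^ card A < q"
  shows "\<exists>g::'a \<Rightarrow> real. (\<forall>x\<in>A. \<forall>c\<in>A. x + c \<in> A \<longrightarrow> g (x + c) = g x + g c) \<and> g a \<noteq> g b"
proof -
  interpret V: vector_space "sc :: real \<Rightarrow> ('a \<Rightarrow> real) \<Rightarrow> ('a \<Rightarrow> real)" by (rule vs_sc)
  define P where "P = {(x, c). x \<in> A \<and> c \<in> A \<and> x + c \<in> A}"
  define R where "R = (\<lambda>(x, c). ind x + ind c - ind (x + c)) ` P"
  define T where "T = ind ` A"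
  have finT: "finite T" unfolding T_def using A by simp
  have RT: "R \<subseteq> V.span T"
  proof
    fix \<rho> assume "\<rho> \<in> R"
    then obtain x c where "x \<in> A" "c \<in> A" "x + c \<in> A" and \<rho>: "\<rho> = ind x + ind c - ind (x + c)"
      unfolding R_def P_def by auto
    then have "ind x \<in> V.span T" "ind c \<in> V.span T" "ind (x + c) \<in> V.span T"
      unfolding T_def by (auto intro: V.span_base)
    then show "\<rho> \<in> V.span T" unfolding \<rho> by (intro V.span_diff V.span_add)
  qed
  obtain B where B: "B \<subseteq> R" "V.independent B" "R \<subseteq> V.span B"
    using V.maximal_independent_subset by blast
  have "B \<subseteq> V.span T" using B(1) RT by blast
  then have finB: "finite B" and cardB: "card B \<le> card T"
    using V.independent_span_bound[OF finT B(2)] by auto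
  have cardT: "card T \<le> card A" unfolding T_def by (rule card_image_le[OF A])
  define N where "N = (2::nat) ^ card A"
  define y where "y j = (\<lambda>z. frac (real j * \<chi> z))" for j :: nat
  have ycong: "cong1 (y j z) (real j * \<chi> z)" for j z unfolding y_def by (rule cong1_frac)
  have vals: "Dp A \<rho> (y j) = 0 \<or> Dp A \<rho> (y j) = 1" if "\<rho> \<in> R" for \<rho> j
  proof -
    obtain x c where xc: "x \<in> A" "c \<in> A" "x + c \<in> A" and \<rho>: "\<rho> = ind x + ind c - ind (x + c)"
      using \<open>\<rho> \<in> R\<close> unfolding R_def P_def by auto
    have D: "Dp A \<rho> (y j) = y j x + y j c - y j (x + c)" unfolding \<rho> using A xc by (rule Dp_row)
    have "cong1 (y j x + y j c - y j (x + c)) (real j * \<chi> x + real j * \<chi> c - real j * \<chi> (x + c))"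
      by (intro cong1_add cong1_diff ycong)
    moreover have "cong1 (real j * (\<chi> x + \<chi> c - \<chi> (x + c))) (real j * 0)"
    proof (rule cong1_mult_int)
      show "real j \<in> \<int>" by simp
      have "cong1 (\<chi> (x + c)) (\<chi> x + \<chi> c)" using chA xc by blast
      then have "- (\<chi> (x + c) - (\<chi> x + \<chi> c)) \<in> \<int>" unfolding cong1_def by (rule Ints_minus)
      then show "cong1 (\<chi> x + \<chi> c - \<chi> (x + c)) 0" unfolding cong1_def by simp
    qed
    moreover have "real j * \<chi> x + real j * \<chi> c - real j * \<chi> (x + c) = real j * (\<chi> x + \<chi> c - \<chi> (x + c))"
      by (simp add: algebra_simps)
    ultimately have "cong1 (y j x + y j c - y j (x + c)) (real j * 0)"
      using cong1_trans by metis
    then have "cong1 (y j x + y j c - y j (x + c)) 0" by simp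
    then have I: "Dp A \<rho> (y j) \<in> \<int>" unfolding D cong1_def by simp
    have "0 \<le> y j z" "y j z < 1" for z unfolding y_def by (simp_all add: frac_lt_1)
    then have "-1 < Dp A \<rho> (y j)" "Dp A \<rho> (y j) < 2" unfolding D
      using add_strict_mono[of 0 "y j x + 1" 0 "y j c"] by (smt (verit) \<open>\<And>z. 0 \<le> y j z\<close> \<open>\<And>z. y j z < 1\<close>)+
    then show ?thesis using int_small[OF I] by blast
  qed
  define f where "f j = {\<rho> \<in> B. Dp A \<rho> (y j) = 1}" for j
  have "\<not> inj_on f {..N}"
  proof
    assume inj: "inj_on f {..N}"
    have "f ` {..N} \<subseteq> Pow B" unfolding f_def by auto
    then have "card {..N} \<le> card (Pow B)" using card_inj_on_le[OF inj] finB by auto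
    also have "\<dots> = 2 ^ card B" using finB by (simp add: card_Pow)
    also have "\<dots> \<le> 2 ^ card A" using cardB cardT by (intro power_increasing) auto
    finally show False unfolding N_def by simp
  qed
  then obtain j1 j2 where j: "j1 \<le> N" "j2 \<le> N" "j1 \<noteq> j2" "f j1 = f j2"
    unfolding inj_on_def by auto
  define g where "g = (\<lambda>z. y j1 z - y j2 z)"
  have gB: "Dp A \<rho> g = 0" if "\<rho> \<in> B" for \<rho>
  proof -
    have "\<rho> \<in> R" using that B(1) by blast
    have "(\<rho> \<in> f j1) = (\<rho> \<in> f j2)" using j(4) by simp
    then have "(Dp A \<rho> (y j1) = 1) = (Dp A \<rho> (y j2) = 1)" using that unfolding f_def by simp
    then have "Dp A \<rho> (y j1) = Dp A \<rho> (y j2)" using vals[OF \<open>\<rho> \<in> R\<close>, of j1] vals[OF \<open>\<rho> \<in> R\<close>, of j2]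
      by auto
    then show ?thesis unfolding g_def Dp_gdiff by simp
  qed
  have sub: "V.subspace {\<rho>. Dp A \<rho> g = 0}"
    unfolding V.subspace_def by (simp add: Dp_zero Dp_add Dp_sc)
  have "V.span B \<subseteq> {\<rho>. Dp A \<rho> g = 0}"
    using gB by (intro V.span_minimal sub) auto
  then have gR: "Dp A \<rho> g = 0" if "\<rho> \<in> R" for \<rho> using that B(3) by blast
  have add: "\<forall>x\<in>A. \<forall>c\<in>A. x + c \<in> A \<longrightarrow> g (x + c) = g x + g c"
  proof (intro ballI impI)
    fix x c assume xc: "x \<in> A" "c \<in> A" "x + c \<in> A"
    then have "ind x + ind c - ind (x + c) \<in> R" unfolding R_def P_def by auto
    then have "Dp A (ind x + ind c - ind (x + c)) g = 0" by (rule gR)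
    then show "g (x + c) = g x + g c" using Dp_row[OF A xc, of g] by simp
  qed
  have gab: "g a \<noteq> g b"
  proof
    assume eq: "g a = g b"
    define d where "d = real_of_int (int j1 - int j2)"
    have "cong1 (g a - g b) ((real j1 * \<chi> a - real j2 * \<chi> a) - (real j1 * \<chi> b - real j2 * \<chi> b))"
      unfolding g_def by (intro cong1_diff ycong)
    moreover have "(real j1 * \<chi> a - real j2 * \<chi> a) - (real j1 * \<chi> b - real j2 * \<chi> b) = d * (\<chi> a - \<chi> b)"
      unfolding d_def by (simp add: algebra_simps)
    moreover have "cong1 (d * (\<chi> a - \<chi> b)) (d * (1 / real q))"
      by (rule cong1_mult_int[OF _ chab]) (simp add: d_def)
    ultimately have "cong1 (g a - g b) (d * (1 / real q))" using cong1_trans by metis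
    then have "cong1 0 (d * (1 / real q))" using eq by simp
    then have "- (0 - d * (1 / real q)) \<in> \<int>" unfolding cong1_def by (rule Ints_minus)
    then have I: "d / real q \<in> \<int>" by simp
    have "\<bar>d\<bar> \<le> real N" unfolding d_def using j(1,2) by linarith
    moreover have "real N < real q" using q unfolding N_def by simp
    ultimately have "\<bar>d / real q\<bar> < 1" using q by (simp add: abs_divide divide_less_eq)
    then have "d / real q = 0" by (rule int_abs_small[OF I])
    then have "d = 0" using q by simp
    then show False using j(3) unfolding d_def by simp
  qed
  show ?thesis by (rule exI[of _ g], rule conjI[OF add gab])
qed

lemma nmul_mod: assumes "nmul n x = 0" shows "nmul m x = nmul (m mod n) x"
proof -
  have "m = (m div n) * n + m mod n" by simp
  then have "nmul m x = nmul ((m div n) * n) x + nmul (m mod n) x" by (metis nmul_add)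
  also have "nmul ((m div n) * n) x = 0" by (simp add: nmul_mult assms)
  finally show ?thesis by simp
qed

lemma cyclic_sub:
  fixes x :: "'a::ab_group_add"
  assumes x: "x \<noteq> 0" and n: "n > 0" and nx: "nmul n x = 0"
  shows "\<exists>H::'a set. add_subgroup H \<and> H \<noteq> {0} \<and> finite H \<and> card H \<le> n"
proof -
  define H where "H = (\<lambda>i. nmul i x) ` {..<n}"
  have mem: "nmul m x \<in> H" for m
  proof -
    have "nmul m x = nmul (m mod n) x" by (rule nmul_mod[OF nx])
    moreover have "m mod n \<in> {..<n}" using n by simp
    ultimately show ?thesis unfolding H_def by blast
  qed
  have sub: "add_subgroup H"
    unfolding add_subgroup_def
  proof (intro conjI ballI)
    show "0 \<in> H" using mem[of 0] by simp
  next
    fix u w assume "u \<in> H" "w \<in> H"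
    then obtain i j where "u = nmul i x" "w = nmul j x" unfolding H_def by blast
    then have "u + w = nmul (i + j) x" by (simp add: nmul_add)
    then show "u + w \<in> H" using mem by simp
  next
    fix u assume "u \<in> H"
    then obtain i where i: "u = nmul i x" "i < n" unfolding H_def by blast
    have "nmul (n - i) x + nmul i x = 0" using i(2) nx nmul_add[of "n - i" i x] by simp
    then have "- u = nmul (n - i) x" using i(1) by (simp add: neg_eq_iff_add_eq_0 add.commute)
    then show "- u \<in> H" using mem by simp
  qed
  have "n \<noteq> 1" using x nx by (auto simp: nmul_def)
  then have "x \<in> H" using mem[of 1] by (simp only: nmul_1)
  then have ne: "H \<noteq> {0}" using x by blast
  have fin: "finite H" unfolding H_def by simp
  have card: "card H \<le> n" unfolding H_def using card_image_le[of "{..<n}"] by simp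
  show ?thesis using sub ne fin card by blast
qed

lemma pG_le:
  fixes x :: "'a::ab_group_add"
  assumes x: "x \<noteq> 0" and n: "n > 0" and nx: "nmul n x = 0"
  shows "pG TYPE('a) \<le> n"
proof -
  obtain H :: "'a set" where H: "add_subgroup H" "H \<noteq> {0}" "finite H" "card H \<le> n"
    using cyclic_sub[OF assms] by blast
  have "pG TYPE('a) \<le> card H" unfolding pG_def
    by (rule Least_le) (use H in blast)
  then show ?thesis using H(4) by simp
qed

lemma pG_pos:
  assumes "torsion_subgroup \<noteq> ({0} :: 'a::ab_group_add set)"
  shows "pG TYPE('a) > 0"
proof -
  have "0 \<in> (torsion_subgroup :: 'a set)" unfolding torsion_subgroup_def
    by (rule CollectI, rule exI[of _ 1]) simp
  then obtain x :: 'a where "x \<in> torsion_subgroup" "x \<noteq> 0" using assms by blast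
  then obtain n where n: "n > 0" "nmul n x = 0" unfolding torsion_subgroup_def nmul_def by blast
  obtain H0 :: "'a set" where "add_subgroup H0" "H0 \<noteq> {0}" "finite H0"
    using cyclic_sub[OF \<open>x \<noteq> 0\<close> n] by blast
  then have ex: "\<exists>H::'a set. add_subgroup H \<and> H \<noteq> {0} \<and> finite H \<and> card H = card H0" by blast
  have "\<exists>H::'a set. add_subgroup H \<and> H \<noteq> {0} \<and> finite H \<and> card H = pG TYPE('a)"
    unfolding pG_def by (rule LeastI[of _ "card H0"]) (fact ex)
  then obtain H' :: "'a set" where H': "add_subgroup H'" "finite H'" "card H' = pG TYPE('a)"
    by blast
  have "0 \<in> H'" using H'(1) by (simp add: add_subgroup_def)
  then have "card H' > 0" using H'(2) card_gt_0_iff by blast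
  then show ?thesis using H'(3) by simp
qed

definition addv :: "'a::ab_group_add set \<Rightarrow> ('a \<Rightarrow> real) \<Rightarrow> bool" where
  "addv A g \<longleftrightarrow> (\<forall>x\<in>A. \<forall>c\<in>A. x + c \<in> A \<longrightarrow> g (x + c) = g x + g c)"

lemma combine:
  assumes "finite P" and "\<forall>(a, b)\<in>P. \<exists>g. addv A g \<and> g a \<noteq> g b"
  shows "\<exists>g. addv A g \<and> (\<forall>(a, b)\<in>P. g a \<noteq> g b)"
  using assms
proof (induct P rule: finite_induct)
  case empty
  have "addv A (\<lambda>_. 0)" by (simp add: addv_def)
  then show ?case by blast
next
  case (insert ab P)
  obtain a b where ab: "ab = (a, b)" by fastforce
  obtain h where h: "addv A h" "\<forall>(x, y)\<in>P. h x \<noteq> h y" using insert by auto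
  obtain g' where g': "addv A g'" "g' a \<noteq> g' b" using insert(4) ab by auto
  define E where "E = (\<lambda>(x, y). (h y - h x) / (g' x - g' y)) ` insert ab P"
  have "finite E" unfolding E_def using insert(1) by simp
  then obtain t :: real where t: "t \<notin> E" using ex_new_if_finite[OF infinite_UNIV_char_0] by blast
  define G where "G = (\<lambda>z. h z + t * g' z)"
  have "addv A G" using h(1) g'(1) unfolding addv_def G_def by (simp add: algebra_simps)
  moreover have "\<forall>(x, y)\<in>insert ab P. G x \<noteq> G y"
  proof (intro ballI, clarify)
    fix x y assume xy: "(x, y) \<in> insert ab P" and eq: "G x = G y"
    show False
    proof (cases "g' x = g' y")
      case True
      then have "(x, y) \<noteq> ab" using g'(2) ab by auto
      then have "(x, y) \<in> P" using xy by auto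
      then have "h x \<noteq> h y" using h(2) by auto
      then show False using eq True unfolding G_def by simp
    next
      case False
      have "t = (h y - h x) / (g' x - g' y)" using eq False unfolding G_def
        by (simp add: field_simps)
      then have "t \<in> E" unfolding E_def using xy by force
      then show False using t by simp
    qed
  qed
  ultimately show ?case by blast
qed

theorem lemma3p10:
  fixes A :: "'a::ab_group_add set"
  assumes "torsion_subgroup \<noteq> ({0} :: 'a set)"
    and "finite A"
    and "int (card A) < \<lceil>log 2 (real (pG TYPE('a)))\<rceil>"
  shows "\<exists>r. compatible_order A r"
proof -
  have p0: "pG TYPE('a) > 0" by (rule pG_pos[OF assms(1)])
  have "real (card A) < log 2 (real (pG TYPE('a)))" using assms(3) by (simp add: less_ceiling_iff)
  then have "2 powr real (card A) < real (pG TYPE('a))" using p0 by (simp add: less_log_iff)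
  then have kp: "2 ^ card A < pG TYPE('a)" by (simp add: powr_realpow)
  have sep: "\<exists>g. addv A g \<and> g a \<noteq> g b" if ab: "a \<in> A" "b \<in> A" "a \<noteq> b" for a b
  proof -
    define v where "v = a - b"
    have v0: "v \<noteq> 0" using ab unfolding v_def by simp
    have noTor: "2 ^ card A < n" if "0 < n" "nmul n v = 0" for n
      using pG_le[OF v0 that] kp by simp
    obtain K \<chi> q where K: "add_subgroup K" "char_on K \<chi>" "A \<subseteq> K" "v \<in> K"
      "cong1 (\<chi> v) (1 / real q)" "2 ^ card A < q"
      using char_for_v[OF noTor assms(2)] by blast
    have chA: "\<forall>x\<in>A. \<forall>c\<in>A. x + c \<in> A \<longrightarrow> cong1 (\<chi> (x + c)) (\<chi> x + \<chi> c)"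
      using K(2,3) unfolding char_on_def by blast
    have "cong1 (\<chi> (b + v)) (\<chi> b + \<chi> v)" using K(2,3,4) ab(2) unfolding char_on_def by blast
    then have "cong1 (\<chi> a) (\<chi> b + \<chi> v)" unfolding v_def by simp
    then have "cong1 (\<chi> a - \<chi> b) (\<chi> b + \<chi> v - \<chi> b)" by (rule cong1_diff) simp
    then have "cong1 (\<chi> a - \<chi> b) (\<chi> v)" by simp
    then have chab: "cong1 (\<chi> a - \<chi> b) (1 / real q)" using K(5) by (rule cong1_trans)
    show ?thesis using separate[OF assms(2) ab(1,2) chA chab K(6)] unfolding addv_def .
  qed
  have "finite {(a, b). a \<in> A \<and> b \<in> A \<and> a \<noteq> b}"
    by (rule finite_subset[of _ "A \<times> A"]) (use assms(2) in auto)
  moreover have "\<forall>(a, b)\<in>{(a, b). a \<in> A \<and> b \<in> A \<and> a \<noteq> b}. \<exists>g. addv A g \<and> g a \<noteq> g b"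
    using sep by auto
  ultimately obtain g where g: "addv A g" "\<forall>(a, b)\<in>{(a, b). a \<in> A \<and> b \<in> A \<and> a \<noteq> b}. g a \<noteq> g b"
    using combine by blast
  have inj: "x = y" if "x \<in> A" "y \<in> A" "g x = g y" for x y using g(2) that by auto
  define r where "r = {(x, y). x \<in> A \<and> y \<in> A \<and> g x \<le> g y}"
  have "linear_order_on A r"
    unfolding linear_order_on_def partial_order_on_def preorder_on_def
  proof (intro conjI)
    show "r \<subseteq> A \<times> A" unfolding r_def by auto
    show "refl_on A r" unfolding r_def refl_on_def by auto
    show "trans r" unfolding r_def trans_def by auto
    show "antisym r" unfolding r_def antisym_def using inj by force
    show "total_on A r" unfolding r_def total_on_def by auto
  qed
  moreover have "\<forall>a\<in>A. \<forall>b\<in>A. \<forall>c\<in>A. a + c \<in> A \<and> b + c \<in> A \<and> (a, b) \<in> r \<longrightarrow> (a + c, b + c) \<in> r"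
    using g(1) unfolding r_def addv_def by auto
  ultimately have "compatible_order A r" unfolding compatible_order_def by blast
  then show ?thesis by blast
qed

end
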